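(* Let $n\ge2$ and $1/n\le t\le 1/(n-1)$. Then $P(t)=E_t$.
   Context: $E_t=\{\mathbf{p}\in\mathbb{R}^n:\mathbf{p}\cdot\mathbf{p}\le t,\ \sum_i\mathbf{p}_i=1\}$ and $P(t)=\{\mathbf{p}\in\mathbb{R}^n:\mathbf{p}\ge0,\ \sum_i\mathbf{p}_i=1,\ \mathbf{p}\cdot\mathbf{p}\le t\}$. *)

theory Defs
  imports "HOL-Analysis.Analysis"
begin

text \<open>Vectors in R^n are modelled as real^'n, with n = CARD('n).\<close>

definition E_set :: "real \<Rightarrow> (real ^ 'n) set" where
  "E_set t = {p. p \<bullet> p \<le> t \<and> (\<Sum>i\<in>UNIV. p $ i) = 1}"

definition P_set :: "real \<Rightarrow> (real ^ 'n) set" where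
  "P_set t = {p. (\<forall>i. 0 \<le> p $ i) \<and> (\<Sum>i\<in>UNIV. p $ i) = 1 \<and> p \<bullet> p \<le> t}"

end

theory Submission
  imports Defs
begin

lemma cs_sum:
  fixes x :: "'a \<Rightarrow> real"
  assumes "finite A"
  shows "(sum x A)^2 \<le> real (card A) * sum (\<lambda>i. (x i)^2) A"
proof -
  define S where "S = sum x A"
  define k where "k = real (card A)"
  define Q where "Q = sum (\<lambda>i. (x i)^2) A"
  have "0 \<le> sum (\<lambda>i. (k * x i - S)^2) A" by (simp add: sum_nonneg)
  also have "\<dots> = sum (\<lambda>i. k^2 * (x i)^2 - 2*k*S * x i + S^2) A"
    by (rule sum.cong) (auto simp: power2_eq_square algebra_simps)
  also have "\<dots> = k^2 * Q - 2*k*S*S + k * S^2"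
    by (simp add: sum.distrib sum_subtractf sum_distrib_left[symmetric] Q_def S_def k_def)
  also have "\<dots> = k * (k * Q - S^2)" by (simp add: power2_eq_square algebra_simps)
  finally have h: "0 \<le> k * (k * Q - S^2)" .
  show ?thesis
  proof (cases "k = 0")
    case True
    then have "A = {}" using assms by (simp add: k_def)
    then show ?thesis by simp
  next
    case False
    have "k > 0" using False by (simp add: k_def)
    then have "0 \<le> k * Q - S^2" using h by (simp add: zero_le_mult_iff)
    then show ?thesis by (simp add: S_def k_def Q_def)
  qed
qed

theorem lemma4:
  fixes t :: real
  assumes "CARD('n::finite) \<ge> 2"
    and "1 / real CARD('n) \<le> t"
    and "t \<le> 1 / (real CARD('n) - 1)"
  shows "(P_set t :: (real ^ 'n) set) = E_set t"
proof
  show "(P_set t :: (real ^ 'n) set) \<subseteq> E_set t" by (auto simp: P_set_def E_set_def)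
next
  show "E_set t \<subseteq> (P_set t :: (real ^ 'n) set)"
  proof
    fix p :: "real ^ 'n"
    assume "p \<in> E_set t"
    then have pp: "p \<bullet> p \<le> t" and s1: "(\<Sum>i\<in>UNIV. p $ i) = 1" by (auto simp: E_set_def)
    have "\<forall>j. 0 \<le> p $ j"
    proof (rule ccontr)
      assume "\<not> (\<forall>j. 0 \<le> p $ j)"
      then obtain j where j: "p $ j < 0" by (auto simp: not_le)
      define A where "A = (UNIV :: 'n set) - {j}"
      have cA: "card A = CARD('n) - 1" by (simp add: A_def card_Diff_singleton)
      have kpos: "real (card A) > 0" using cA assms(1) by simp
      have rk: "real (card A) = real CARD('n) - 1" using cA assms(1) by (simp add: of_nat_diff)
      have "(\<Sum>i\<in>UNIV. p $ i) = p $ j + sum (\<lambda>i. p $ i) A"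
        unfolding A_def by (simp add: sum.remove[of UNIV j])
      then have sA: "sum (\<lambda>i. p $ i) A = 1 - p $ j" using s1 by simp
      have "p \<bullet> p = (\<Sum>i\<in>UNIV. (p $ i)^2)" by (simp add: inner_vec_def power2_eq_square)
      also have "\<dots> = (p $ j)^2 + sum (\<lambda>i. (p $ i)^2) A"
        unfolding A_def by (simp add: sum.remove[of UNIV j])
      finally have ppA: "p \<bullet> p = (p $ j)^2 + sum (\<lambda>i. (p $ i)^2) A" .
      have cs: "(1 - p $ j)^2 \<le> real (card A) * sum (\<lambda>i. (p $ i)^2) A"
        using cs_sum[of A "\<lambda>i. p $ i"] sA by (simp add: A_def)
      have "1 < (1 - p $ j)^2" using j by (simp add: power2_eq_square) (smt (verit) mult_le_cancel_left1)
      then have "1 < real (card A) * sum (\<lambda>i. (p $ i)^2) A" using cs by linarith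
      then have "1 / real (card A) < sum (\<lambda>i. (p $ i)^2) A" using kpos
        by (simp add: divide_less_eq mult.commute)
      moreover have "0 < (p $ j)^2" using j by simp
      ultimately have "1 / real (card A) < p \<bullet> p" using ppA by linarith
      then show False using pp assms(3) rk by simp
    qed
    then show "p \<in> P_set t" using pp s1 by (simp add: P_set_def)
  qed
qed

end
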